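(* Let $k, n \in \mathbb{N}$ with $k \le 2n$. Color every edge of the complete bipartite graph $K_{2n,2n}$ either red or blue in such a way that every vertex is incident with exactly $n$ red edges and exactly $n$ blue edges. Then $K_{2n,2n}$ has a perfect matching consisting of exactly $k$ red edges and $2n-k$ blue edges, unless $k$ is odd and the graph of blue edges is isomorphic to $K_{n,n} \cup K_{n,n}$ (the disjoint union of two copies of $K_{n,n}$).
   Context: The graph of blue edges is the spanning subgraph of $K_{2n,2n}$ on all $4n$ vertices whose edge set is the set of blue edges. *)

theory Defs
  imports Main
begin

text \<open>A red/blue colouring is given by a predicate blue i j on pairs of a left and a right vertex;
  edge (i,j) is blue iff blue i j holds, and red otherwise.\<close>

definition bip_vertices :: "nat \<Rightarrow> (nat + nat) set" where
  "bip_vertices m = Inl ` {..<m} \<union> Inr ` {..<m}"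

fun blue_adj :: "(nat \<Rightarrow> nat \<Rightarrow> bool) \<Rightarrow> nat + nat \<Rightarrow> nat + nat \<Rightarrow> bool" where
  "blue_adj b (Inl i) (Inr j) = b i j"
| "blue_adj b (Inr j) (Inl i) = b i j"
| "blue_adj b _ _ = False"

text \<open>Two disjoint copies of K_{n,n}: vertex (c, s, i) = copy c, side s, index i < n.\<close>
definition two_Knn_vertices :: "nat \<Rightarrow> (bool \<times> bool \<times> nat) set" where
  "two_Knn_vertices n = UNIV \<times> UNIV \<times> {..<n}"

definition two_Knn_adj :: "bool \<times> bool \<times> nat \<Rightarrow> bool \<times> bool \<times> nat \<Rightarrow> bool" where
  "two_Knn_adj u v = (fst u = fst v \<and> fst (snd u) \<noteq> fst (snd v))"

definition graph_iso :: "'a set \<Rightarrow> ('a \<Rightarrow> 'a \<Rightarrow> bool) \<Rightarrow> 'b set \<Rightarrow> ('b \<Rightarrow> 'b \<Rightarrow> bool) \<Rightarrow> bool" where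
  "graph_iso V1 E1 V2 E2 = (\<exists>f. bij_betw f V1 V2 \<and> (\<forall>u\<in>V1. \<forall>v\<in>V1. E1 u v \<longleftrightarrow> E2 (f u) (f v)))"

end

theory Submission
  imports Defs
begin

lemma core:
  fixes M :: "nat \<Rightarrow> nat \<Rightarrow> bool" and n :: nat and U :: "nat set"
  assumes U: "U = {..<2*n}"
    and rowc: "\<And>i. i \<in> U \<Longrightarrow> card {j\<in>U. M i j} = n"
    and colc: "\<And>j. j \<in> U \<Longrightarrow> card {i\<in>U. M i j} = n"
    and y0: "y0 \<in> U" "\<not> M y0 y0"
    and ha: "\<And>y x. y\<in>U \<Longrightarrow> x\<in>U \<Longrightarrow> \<not>M y y \<Longrightarrow> M x x \<Longrightarrow> M y x \<Longrightarrow> M x y \<Longrightarrow> False"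
    and hb: "\<And>y y'. y\<in>U \<Longrightarrow> y'\<in>U \<Longrightarrow> \<not>M y y \<Longrightarrow> \<not>M y' y' \<Longrightarrow> M y y' \<Longrightarrow> M y' y"
    and hc1: "\<And>y y' x. y\<in>U \<Longrightarrow> y'\<in>U \<Longrightarrow> x\<in>U \<Longrightarrow> \<not>M y y \<Longrightarrow> \<not>M y' y' \<Longrightarrow> M x x
        \<Longrightarrow> y\<noteq>y' \<Longrightarrow> M y y' \<Longrightarrow> M y' x = M x y"
    and hc2: "\<And>y y' x. y\<in>U \<Longrightarrow> y'\<in>U \<Longrightarrow> x\<in>U \<Longrightarrow> \<not>M y y \<Longrightarrow> \<not>M y' y' \<Longrightarrow> M x x
        \<Longrightarrow> y\<noteq>y' \<Longrightarrow> \<not> M y y' \<Longrightarrow> M y' x \<Longrightarrow> M x y \<Longrightarrow> False"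
    and hd: "\<And>y x x'. y\<in>U \<Longrightarrow> x\<in>U \<Longrightarrow> x'\<in>U \<Longrightarrow> \<not>M y y \<Longrightarrow> M x x \<Longrightarrow> M x' x'
        \<Longrightarrow> x\<noteq>x' \<Longrightarrow> M y x \<Longrightarrow> M x x' \<Longrightarrow> M x' y \<Longrightarrow> False"
    and he: "\<And>y y' z. y\<in>U \<Longrightarrow> y'\<in>U \<Longrightarrow> z\<in>U \<Longrightarrow> \<not>M y y \<Longrightarrow> \<not>M y' y' \<Longrightarrow> \<not>M z z
        \<Longrightarrow> y\<noteq>y' \<Longrightarrow> y'\<noteq>z \<Longrightarrow> z\<noteq>y \<Longrightarrow> M y y' \<Longrightarrow> \<not>M y' z \<Longrightarrow> \<not>M z y \<Longrightarrow> False"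
  shows "(\<exists>R C. \<forall>i\<in>U. \<forall>j\<in>U. M i j = (i\<in>R \<longleftrightarrow> j\<in>C)) \<and> (\<exists>q\<in>U. \<not>M q q \<and> M y0 q \<and> M q y0)"
proof -
  have finU: "finite U" using U by simp
  have cardU: "card U = 2*n" using U by simp
  define Y where "Y = {i\<in>U. \<not> M i i}"
  define X where "X = {i\<in>U. M i i}"
  define Q where "Q = {q\<in>Y. M y0 q}"
  define P where "P = Y - Q"
  define Os where "Os = {x\<in>X. M y0 x}"
  define Is where "Is = {x\<in>X. M x y0}"
  define Z where "Z = X - Os - Is"
  have fin: "finite Y" "finite X" "finite Q" "finite P" "finite Os" "finite Is" "finite Z"
    using finU by (auto simp: Y_def X_def Q_def P_def Os_def Is_def Z_def)
  have y0Y: "y0 \<in> Y" using y0 by (simp add: Y_def)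
  have y0P: "y0 \<in> P" using y0 by (simp add: P_def Q_def Y_def)
  have symY: "\<And>y y'. y \<in> Y \<Longrightarrow> y' \<in> Y \<Longrightarrow> M y y' = M y' y"
    using hb unfolding Y_def by blast
  have OsIs: "Os \<inter> Is = {}" using ha y0 unfolding Os_def Is_def X_def by blast
  have c1: "card X + card Y = 2*n"
  proof -
    have "X \<union> Y = U" "X \<inter> Y = {}" by (auto simp: X_def Y_def)
    then show ?thesis using card_Un_disjoint[of X Y] fin cardU by simp
  qed
  have c2: "card P + card Q = card Y"
  proof -
    have "P \<union> Q = Y" "P \<inter> Q = {}" by (auto simp: P_def Q_def)
    then show ?thesis using card_Un_disjoint[of P Q] fin by simp
  qed
  have c3: "card Q + card Os = n"
  proof -
    have "{j\<in>U. M y0 j} = Q \<union> Os" by (auto simp: Q_def Os_def Y_def X_def)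
    moreover have "Q \<inter> Os = {}" by (auto simp: Q_def Os_def Y_def X_def)
    ultimately show ?thesis using card_Un_disjoint[of Q Os] fin rowc[OF y0(1)] by simp
  qed
  have c4: "card Q + card Is = n"
  proof -
    have "{i\<in>U. M i y0} = Q \<union> Is" using symY y0Y by (auto simp: Q_def Is_def Y_def X_def)
    moreover have "Q \<inter> Is = {}" by (auto simp: Q_def Is_def Y_def X_def)
    ultimately show ?thesis using card_Un_disjoint[of Q Is] fin colc[OF y0(1)] by simp
  qed
  have c5: "card Os + card Is + card Z = card X"
  proof -
    have "Os \<union> Is \<union> Z = X" "(Os \<union> Is) \<inter> Z = {}" by (auto simp: Z_def Os_def Is_def)
    then show ?thesis using card_Un_disjoint[of "Os \<union> Is" Z] card_Un_disjoint[of Os Is] fin OsIs by simp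
  qed
  have P1: "card P \<ge> 1" using fin y0P by (auto simp: Suc_le_eq card_gt_0_iff)
  have PQ: "card Z + card P = card Q" "card Os = card Is"
    using c1 c2 c3 c4 c5 by auto
  then obtain q0 where q0: "q0 \<in> Q" using P1 card_gt_0_iff by fastforce
  have q0U: "q0 \<in> U" "\<not> M q0 q0" "M y0 q0" using q0 by (auto simp: Q_def Y_def)
  have SY: "\<And>z. z \<in> Y \<Longrightarrow> z \<in> U \<and> \<not> M z z" by (auto simp: Y_def)
  have SX: "\<And>z. z \<in> X \<Longrightarrow> z \<in> U \<and> M z z" by (auto simp: X_def)
  have PY: "P \<subseteq> Y" "Q \<subseteq> Y" "Os \<subseteq> X" "Is \<subseteq> X" "Z \<subseteq> X"
    by (auto simp: P_def Q_def Os_def Is_def Z_def)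
  have S6: "M z q \<and> M q z" if "z \<in> P" "q \<in> Q" for z q
  proof (cases "z = y0")
    case True
    then show ?thesis using that symY y0Y PY by (auto simp: Q_def)
  next
    case False
    have zq: "\<not> M y0 z" using that by (auto simp: P_def Q_def)
    have "M q z"
    proof (rule ccontr)
      assume "\<not> M q z"
      moreover have "\<not> M z y0" using zq symY that PY y0Y by blast
      moreover have "y0 \<noteq> q" "q \<noteq> z" using that q0U y0 by (auto simp: Q_def P_def)
      ultimately show False using he[of y0 q z] that PY SY y0 False by (auto simp: Q_def)
    qed
    then show ?thesis using symY that PY by blast
  qed
  have S7: "\<not> M z z'" if "z \<in> P" "z' \<in> P" for z z'
  proof (cases "z = z' \<or> z = y0 \<or> z' = y0")
    case True
    then show ?thesis using that symY y0Y PY SY by (auto simp: P_def Q_def)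
  next
    case False
    have "\<not> M y0 z'" "\<not> M y0 z" using that by (auto simp: P_def Q_def)
    then have "\<not> M z' y0" "\<not> M y0 z" using symY[of z' y0] that PY y0Y by auto
    then show ?thesis using he[of z z' y0] that PY SY y0 False by blast
  qed
  have S8: "M q x = (x \<in> Is)" if "q \<in> Q" "x \<in> X" for q x
  proof -
    have "y0 \<noteq> q" using that y0 by (auto simp: Q_def)
    then have "M q x = M x y0" using hc1[of y0 q x] that y0 SX SY PY by (auto simp: Q_def)
    then show ?thesis using that by (auto simp: Is_def)
  qed
  have S9: "M x q = (x \<in> Os)" if "q \<in> Q" "x \<in> X" for q x
  proof -
    have "y0 \<noteq> q" using that y0 by (auto simp: Q_def)
    moreover have "M q y0" using that symY y0Y PY by (auto simp: Q_def)
    ultimately have "M y0 x = M x q" using hc1[of q y0 x] that y0 SX SY PY by auto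
    then show ?thesis using that by (auto simp: Os_def)
  qed
  have S10: "M z x = (x \<in> Os)" if "z \<in> P" "x \<in> X" for z x
  proof -
    have "q0 \<noteq> z" using that q0 by (auto simp: P_def)
    moreover have "M q0 z" using S6 that q0 by blast
    ultimately have "M z x = M x q0" using hc1[of q0 z x] that q0 SX SY PY by blast
    then show ?thesis using S9 q0 that by simp
  qed
  have S11: "M x z = (x \<in> Is)" if "z \<in> P" "x \<in> X" for z x
  proof -
    have "q0 \<noteq> z" using that q0 by (auto simp: P_def)
    moreover have "M z q0" using S6 that q0 by blast
    ultimately have "M q0 x = M x z" using hc1[of z q0 x] that q0 SX SY PY by blast
    then show ?thesis using S8 q0 that by simp
  qed
  have S12: "\<not> M x x'" if "x \<in> Os" "x' \<in> Is" for x x'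
  proof
    assume "M x x'"
    moreover have "x \<noteq> x'" using that OsIs by blast
    ultimately show False using hd[of y0 x x'] that y0 SX PY by (auto simp: Os_def Is_def)
  qed
  have S13: "\<not> M x x'" if "x \<in> Is" "x' \<in> Os" for x x'
  proof
    assume "M x x'"
    moreover have "x \<noteq> x'" using that OsIs by blast
    moreover have "M q0 x" "M x' q0" using S8 S9 q0 that PY by auto
    moreover have "x \<in> X" "x' \<in> X" using that PY by auto
    ultimately show False using hd[of q0 x x'] q0U SX by blast
  qed
  have UYX: "U = Y \<union> X" by (auto simp: Y_def X_def)
  have disj: "P \<inter> Q = {}" "Y \<inter> X = {}" "Os \<inter> Is = {}" "Z \<inter> Os = {}" "Z \<inter> Is = {}"
    "P \<inter> Is = {}" "P \<inter> Z = {}" "Q \<inter> Is = {}" "P \<inter> Os = {}" "Q \<inter> Os = {}"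
    using OsIs PY by (auto simp: P_def Z_def Y_def X_def)
  have YPQ: "Y = P \<union> Q" "X = Os \<union> Is \<union> Z" by (auto simp: P_def Q_def Z_def Os_def Is_def)
  have cPIZ: "card (P \<union> Is \<union> Z) = n"
  proof -
    have "card (P \<union> Is \<union> Z) = card (P \<union> Is) + card Z"
      by (rule card_Un_disjoint) (use disj fin in auto)
    moreover have "card (P \<union> Is) = card P + card Is"
      by (rule card_Un_disjoint) (use disj fin in auto)
    ultimately show ?thesis using PQ c4 by simp
  qed
  have cPOZ: "card (P \<union> Os \<union> Z) = n"
  proof -
    have "card (P \<union> Os \<union> Z) = card (P \<union> Os) + card Z"
      by (rule card_Un_disjoint) (use disj fin in auto)
    moreover have "card (P \<union> Os) = card P + card Os"
      by (rule card_Un_disjoint) (use disj fin in auto)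
    ultimately show ?thesis using PQ c4 by simp
  qed
  have cQI: "card (Q \<union> Is) = n" using disj fin c4 by (simp add: card_Un_disjoint)
  have cQO: "card (Q \<union> Os) = n" using disj fin c3 by (simp add: card_Un_disjoint)
  have R_Is: "{j\<in>U. M x j} = P \<union> Is \<union> Z" if "x \<in> Is" for x
  proof -
    have xX: "x \<in> X" "x \<notin> Os" using that PY OsIs by auto
    have sub: "{j\<in>U. M x j} \<subseteq> P \<union> Is \<union> Z"
    proof
      fix j assume j: "j \<in> {j\<in>U. M x j}"
      show "j \<in> P \<union> Is \<union> Z"
      proof (cases "j \<in> Y")
        case True
        then have "j \<notin> Q" using S9[of j x] j xX by auto
        then show ?thesis using True YPQ by auto
      next
        case False
        then have "j \<in> X" using j UYX by auto
        then show ?thesis using S13[of x j] j that YPQ by auto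
      qed
    qed
    have "card {j\<in>U. M x j} = n" using rowc that PY SX by auto
    moreover have "finite (P \<union> Is \<union> Z)" using fin by auto
    ultimately show ?thesis using card_subset_eq[OF _ sub] cPIZ by auto
  qed
  have C_Os: "{i\<in>U. M i x'} = P \<union> Os \<union> Z" if "x' \<in> Os" for x'
  proof -
    have xX: "x' \<in> X" "x' \<notin> Is" using that PY OsIs by auto
    have sub: "{i\<in>U. M i x'} \<subseteq> P \<union> Os \<union> Z"
    proof
      fix j assume j: "j \<in> {i\<in>U. M i x'}"
      show "j \<in> P \<union> Os \<union> Z"
      proof (cases "j \<in> Y")
        case True
        then have "j \<notin> Q" using S8[of j x'] j xX by auto
        then show ?thesis using True YPQ by auto
      next
        case False
        then have "j \<in> X" using j UYX by auto
        then show ?thesis using S13[of j x'] j that YPQ by auto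
      qed
    qed
    have "card {i\<in>U. M i x'} = n" using colc that PY SX by auto
    moreover have "finite (P \<union> Os \<union> Z)" using fin by auto
    ultimately show ?thesis using card_subset_eq[OF _ sub] cPOZ by auto
  qed
  have C_Is: "{i\<in>U. M i x'} = Q \<union> Is" if "x' \<in> Is" for x'
  proof -
    have sub: "Q \<union> Is \<subseteq> {i\<in>U. M i x'}"
      using S8 R_Is that PY SX SY by auto
    have "card {i\<in>U. M i x'} = n" using colc that PY SX by auto
    moreover have "finite {i\<in>U. M i x'}" using finU by auto
    ultimately show ?thesis using card_subset_eq[OF _ sub] cQI by auto
  qed
  have Zemp: "Z = {}"
  proof (rule ccontr)
    assume "Z \<noteq> {}"
    then obtain w where w: "w \<in> Z" by auto
    have wX: "w \<in> X" "w \<notin> Os" "w \<notin> Is" using w by (auto simp: Z_def)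
    have sub: "{j\<in>U. M w j} \<subseteq> Os \<union> Z"
    proof
      fix j assume j: "j \<in> {j\<in>U. M w j}"
      show "j \<in> Os \<union> Z"
      proof (cases "j \<in> Y")
        case True
        have Mwj: "M w j" using j by simp
        have "j \<notin> P" using S11[of j w] wX Mwj by blast
        moreover have "j \<notin> Q" using S9[of j w] wX Mwj by blast
        ultimately show ?thesis using True YPQ by blast
      next
        case False
        have jU: "j \<in> U" "M w j" using j by simp_all
        then have jX: "j \<in> X" using False by (simp add: X_def Y_def)
        have "j \<notin> Is"
        proof
          assume ji: "j \<in> Is"
          have "w \<in> U" using wX(1) SX by blast
          then have "w \<in> {i\<in>U. M i j}" using jU by simp
          then have "w \<in> Q \<union> Is" using C_Is[OF ji] by simp
          moreover have "w \<notin> Q" using wX(1) PY(2) disj(2) by blast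
          ultimately show False using wX(3) by blast
        qed
        then show ?thesis using jX YPQ(2) by blast
      qed
    qed
    have "finite (Os \<union> Z)" using fin by blast
    then have "card {j\<in>U. M w j} \<le> card (Os \<union> Z)" using card_mono[OF _ sub] by blast
    also have "\<dots> = card Os + card Z" by (rule card_Un_disjoint) (use disj fin in auto)
    finally have le: "card {j\<in>U. M w j} \<le> card Os + card Z" .
    have "w \<in> U" using wX SX by blast
    then have "card {j\<in>U. M w j} = n" using rowc by blast
    then show False using le c3 PQ P1 by linarith
  qed
  have cPQ: "card P = card Q" using PQ Zemp by simp
  have RP: "{j\<in>U. M z j} = Q \<union> Os" if "z \<in> P" for z
  proof -
    have sub: "Q \<union> Os \<subseteq> {j\<in>U. M z j}" using S6 S10 that PY SX SY by auto
    have "card {j\<in>U. M z j} = n" using rowc that PY SY by auto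
    moreover have "finite {j\<in>U. M z j}" using finU by auto
    ultimately show ?thesis using card_subset_eq[OF _ sub] cQO by auto
  qed
  have RQ: "{j\<in>U. M q j} = P \<union> Is" if "q \<in> Q" for q
  proof -
    have sub: "P \<union> Is \<subseteq> {j\<in>U. M q j}" using S6 S8 that PY SX SY by auto
    have "card (P \<union> Is) = n" using cPQ disj fin c4 by (simp add: card_Un_disjoint)
    moreover have "card {j\<in>U. M q j} = n" using rowc that PY SY by auto
    moreover have "finite {j\<in>U. M q j}" using finU by auto
    ultimately show ?thesis using card_subset_eq[OF _ sub] by auto
  qed
  have RO: "{j\<in>U. M x j} = Q \<union> Os" if "x \<in> Os" for x
  proof -
    have sub: "Q \<union> Os \<subseteq> {j\<in>U. M x j}" using S9 C_Os that PY SX SY by auto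
    have "card {j\<in>U. M x j} = n" using rowc that PY SX by auto
    moreover have "finite {j\<in>U. M x j}" using finU by auto
    ultimately show ?thesis using card_subset_eq[OF _ sub] cQO by auto
  qed
  have RI: "{j\<in>U. M x j} = P \<union> Is" if "x \<in> Is" for x
    using R_Is[OF that] Zemp by simp
  have part: "U = P \<union> Q \<union> Os \<union> Is" using UYX YPQ Zemp by auto
  have xor: "\<forall>i\<in>U. \<forall>j\<in>U. M i j = (i \<in> P \<union> Os \<longleftrightarrow> j \<in> Q \<union> Os)"
  proof (intro ballI)
    fix i j assume i: "i \<in> U" and j: "j \<in> U"
    have jj: "j \<in> P \<union> Is \<longleftrightarrow> j \<notin> Q \<union> Os" using j part disj by blast
    have Mij: "M i j \<longleftrightarrow> j \<in> {j\<in>U. M i j}" using j by simp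
    consider "i \<in> P" | "i \<in> Q" | "i \<in> Os" | "i \<in> Is" using i part by blast
    then show "M i j = (i \<in> P \<union> Os \<longleftrightarrow> j \<in> Q \<union> Os)"
    proof cases
      case 1
      then show ?thesis using Mij RP[OF 1] by simp
    next
      case 2
      then have "i \<notin> P \<union> Os" using disj by blast
      then show ?thesis using Mij RQ[OF 2] jj by simp
    next
      case 3
      then show ?thesis using Mij RO[OF 3] by simp
    next
      case 4
      then have "i \<notin> P \<union> Os" using disj by blast
      then show ?thesis using Mij RI[OF 4] jj by simp
    qed
  qed
  show ?thesis
  proof
    show "\<exists>R C. \<forall>i\<in>U. \<forall>j\<in>U. M i j = (i\<in>R \<longleftrightarrow> j\<in>C)" using xor by blast
    show "\<exists>q\<in>U. \<not>M q q \<and> M y0 q \<and> M q y0" using q0U q0 S6 y0P by blast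
  qed
qed

definition sw :: "nat \<Rightarrow> nat \<Rightarrow> nat \<Rightarrow> nat" where
  "sw a b i = (if i = a then b else if i = b then a else i)"

lemma sw_bij: assumes "a \<in> U" "b \<in> U" shows "bij_betw (sw a b) U U"
  by (rule bij_betw_byWitness[where f'="sw a b"]) (use assms in \<open>auto simp: sw_def\<close>)

definition vl :: "(nat \<Rightarrow> nat \<Rightarrow> bool) \<Rightarrow> nat \<Rightarrow> (nat \<Rightarrow> nat) \<Rightarrow> nat" where
  "vl B m \<sigma> = card {i. i < m \<and> B i (\<sigma> i)}"

lemma vl_le: "vl B m \<sigma> \<le> m"
proof -
  have "{i. i < m \<and> B i (\<sigma> i)} \<subseteq> {..<m}" by auto
  then show ?thesis unfolding vl_def using card_mono[of "{..<m}"] by fastforce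
qed

lemma vl_change:
  assumes D: "D \<subseteq> {..<m}" and same: "\<And>i. i < m \<Longrightarrow> i \<notin> D \<Longrightarrow> \<sigma>' i = \<sigma> i"
  shows "vl B m \<sigma>' + card {i\<in>D. B i (\<sigma> i)} = vl B m \<sigma> + card {i\<in>D. B i (\<sigma>' i)}"
proof -
  have finD: "finite D" using D finite_subset by blast
  define E where "E = {i. i < m \<and> i \<notin> D \<and> B i (\<sigma> i)}"
  have finE: "finite E" by (auto simp: E_def)
  have e1: "{i. i < m \<and> B i (\<sigma>' i)} = E \<union> {i\<in>D. B i (\<sigma>' i)}"
    using D same by (auto simp: E_def)
  have e2: "{i. i < m \<and> B i (\<sigma> i)} = E \<union> {i\<in>D. B i (\<sigma> i)}"
    using D by (auto simp: E_def)
  have "vl B m \<sigma>' = card E + card {i\<in>D. B i (\<sigma>' i)}"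
    unfolding vl_def e1 by (rule card_Un_disjoint) (use finD finE in \<open>auto simp: E_def\<close>)
  moreover have "vl B m \<sigma> = card E + card {i\<in>D. B i (\<sigma> i)}"
    unfolding vl_def e2 by (rule card_Un_disjoint) (use finD finE in \<open>auto simp: E_def\<close>)
  ultimately show ?thesis by simp
qed

lemma card_bool: "finite A \<Longrightarrow> card {i\<in>A. Q i} = (\<Sum>i\<in>A. of_bool (Q i))"
  by (simp add: Collect_conj_eq Int_commute)

lemma card2: "a \<noteq> b \<Longrightarrow> card {i\<in>{a,b}. Q i} = of_bool (Q a) + of_bool (Q b)"
  by (subst card_bool) simp_all

lemma card3: "a \<noteq> b \<Longrightarrow> b \<noteq> c \<Longrightarrow> a \<noteq> c \<Longrightarrow>
    card {i\<in>{a,b,c}. Q i} = of_bool (Q a) + of_bool (Q b) + of_bool (Q c)"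
  by (subst card_bool) simp_all

lemma swap_val:
  assumes "a < m" "b < m" "a \<noteq> b"
  shows "vl B m (\<sigma> \<circ> sw a b) + of_bool (B a (\<sigma> a)) + of_bool (B b (\<sigma> b))
       = vl B m \<sigma> + of_bool (B a (\<sigma> b)) + of_bool (B b (\<sigma> a))"
proof -
  have "vl B m (\<sigma> \<circ> sw a b) + card {i\<in>{a,b}. B i (\<sigma> i)} = vl B m \<sigma> + card {i\<in>{a,b}. B i ((\<sigma> \<circ> sw a b) i)}"
    by (rule vl_change) (use assms in \<open>auto simp: sw_def\<close>)
  moreover have "card {i\<in>{a,b}. B i (\<sigma> i)} = of_bool (B a (\<sigma> a)) + of_bool (B b (\<sigma> b))"
    by (rule card2) fact
  moreover have "card {i\<in>{a,b}. B i ((\<sigma> \<circ> sw a b) i)} = of_bool (B a (\<sigma> b)) + of_bool (B b (\<sigma> a))"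
    using card2[of a b "\<lambda>i. B i ((\<sigma> \<circ> sw a b) i)"] assms by (simp add: sw_def)
  ultimately show ?thesis by linarith
qed

lemma cyc_val:
  assumes "a < m" "b < m" "c < m" "a \<noteq> b" "b \<noteq> c" "a \<noteq> c"
  shows "vl B m (\<sigma> \<circ> sw a b \<circ> sw b c) + of_bool (B a (\<sigma> a)) + of_bool (B b (\<sigma> b)) + of_bool (B c (\<sigma> c))
       = vl B m \<sigma> + of_bool (B a (\<sigma> b)) + of_bool (B b (\<sigma> c)) + of_bool (B c (\<sigma> a))"
proof -
  have "vl B m (\<sigma> \<circ> sw a b \<circ> sw b c) + card {i\<in>{a,b,c}. B i (\<sigma> i)}
      = vl B m \<sigma> + card {i\<in>{a,b,c}. B i ((\<sigma> \<circ> sw a b \<circ> sw b c) i)}"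
    by (rule vl_change) (use assms in \<open>auto simp: sw_def\<close>)
  moreover have "card {i\<in>{a,b,c}. B i (\<sigma> i)} = of_bool (B a (\<sigma> a)) + of_bool (B b (\<sigma> b)) + of_bool (B c (\<sigma> c))"
    by (rule card3) fact+
  moreover have "card {i\<in>{a,b,c}. B i ((\<sigma> \<circ> sw a b \<circ> sw b c) i)} = of_bool (B a (\<sigma> b)) + of_bool (B b (\<sigma> c)) + of_bool (B c (\<sigma> a))"
    using card3[of a b c "\<lambda>i. B i ((\<sigma> \<circ> sw a b \<circ> sw b c) i)"] assms by (simp add: sw_def)
  ultimately show ?thesis by linarith
qed

lemma bij_sw_comp: "bij_betw \<sigma> {..<m} {..<m} \<Longrightarrow> a < m \<Longrightarrow> b < m \<Longrightarrow> bij_betw (\<sigma> \<circ> sw a b) {..<m} {..<m}"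
  by (rule bij_betw_trans[OF sw_bij]) auto

definition isxor :: "(nat \<Rightarrow> nat \<Rightarrow> bool) \<Rightarrow> nat \<Rightarrow> bool" where
  "isxor B m = (\<exists>R C. \<forall>i<m. \<forall>j<m. B i j = (i\<in>R \<longleftrightarrow> j\<in>C))"

definition noplus :: "(nat \<Rightarrow> nat \<Rightarrow> bool) \<Rightarrow> nat \<Rightarrow> (nat \<Rightarrow> nat) \<Rightarrow> bool" where
  "noplus B m \<sigma> = ((\<forall>a<m. \<forall>b<m. a\<noteq>b \<longrightarrow> vl B m (\<sigma> \<circ> sw a b) \<noteq> vl B m \<sigma> + 1) \<and>
     (\<forall>a<m. \<forall>b<m. \<forall>c<m. a\<noteq>b \<and> b\<noteq>c \<and> a\<noteq>c \<longrightarrow> vl B m (\<sigma> \<circ> sw a b \<circ> sw b c) \<noteq> vl B m \<sigma> + 1))"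

lemma step_core:
  assumes rows: "\<forall>i<2*n. card {j. j<2*n \<and> B i j} = n"
    and cols: "\<forall>j<2*n. card {i. i<2*n \<and> B i j} = n"
    and bij: "bij_betw \<sigma> {..<2*n} {..<2*n}"
    and lt: "vl B (2*n) \<sigma> < 2*n"
    and np: "noplus B (2*n) \<sigma>"
  shows "isxor B (2*n) \<and> (\<exists>\<sigma>'. bij_betw \<sigma>' {..<2*n} {..<2*n} \<and> vl B (2*n) \<sigma>' = vl B (2*n) \<sigma> + 2)"
proof -
  define m where "m = 2*n"
  define U where "U = {..<m}"
  have npT: "\<And>a b. a<m \<Longrightarrow> b<m \<Longrightarrow> a\<noteq>b \<Longrightarrow> vl B m (\<sigma> \<circ> sw a b) \<noteq> vl B m \<sigma> + 1"
    using np unfolding noplus_def m_def by blast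
  have npC: "\<And>a b c. a<m \<Longrightarrow> b<m \<Longrightarrow> c<m \<Longrightarrow> a\<noteq>b \<Longrightarrow> b\<noteq>c \<Longrightarrow> a\<noteq>c \<Longrightarrow>
      vl B m (\<sigma> \<circ> sw a b \<circ> sw b c) \<noteq> vl B m \<sigma> + 1"
    using np unfolding noplus_def m_def by blast
  obtain y0 where y0: "y0 < m" "\<not> B y0 (\<sigma> y0)"
  proof (rule ccontr)
    assume "\<not> thesis"
    then have "\<forall>i<m. B i (\<sigma> i)" using that by blast
    then have "{i. i < m \<and> B i (\<sigma> i)} = {..<m}" by auto
    then have "vl B m \<sigma> = m" unfolding vl_def by simp
    then show False using lt m_def by simp
  qed
  have inj: "inj_on \<sigma> U" and surj: "\<sigma> ` U = U"
    using bij unfolding bij_betw_def U_def m_def by auto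
  have rowc: "card {j\<in>U. B i (\<sigma> j)} = n" if "i \<in> U" for i
  proof -
    have "\<sigma> ` {j\<in>U. B i (\<sigma> j)} = {j\<in>U. B i j}"
    proof
      show "\<sigma> ` {j\<in>U. B i (\<sigma> j)} \<subseteq> {j\<in>U. B i j}" using surj by auto
      show "{j\<in>U. B i j} \<subseteq> \<sigma> ` {j\<in>U. B i (\<sigma> j)}"
      proof
        fix j assume "j \<in> {j\<in>U. B i j}"
        then obtain j' where "j' \<in> U" "\<sigma> j' = j" "B i j" using surj by force
        then show "j \<in> \<sigma> ` {j\<in>U. B i (\<sigma> j)}" by auto
      qed
    qed
    moreover have "inj_on \<sigma> {j\<in>U. B i (\<sigma> j)}" using inj by (rule inj_on_subset) auto
    ultimately have "card {j\<in>U. B i (\<sigma> j)} = card {j\<in>U. B i j}" using card_image by metis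
    also have "{j\<in>U. B i j} = {j. j<2*n \<and> B i j}" by (auto simp: U_def m_def)
    finally show ?thesis using rows that by (simp add: U_def m_def)
  qed
  have colc: "card {i\<in>U. B i (\<sigma> j)} = n" if "j \<in> U" for j
  proof -
    have "\<sigma> j < 2*n" using that surj by (auto simp: U_def m_def)
    moreover have "{i\<in>U. B i (\<sigma> j)} = {i. i<2*n \<and> B i (\<sigma> j)}" by (auto simp: U_def m_def)
    ultimately show ?thesis using cols by simp
  qed
  have ha: "False" if "y\<in>U" "x\<in>U" "\<not>B y (\<sigma> y)" "B x (\<sigma> x)" "B y (\<sigma> x)" "B x (\<sigma> y)" for y x
  proof -
    have "y \<noteq> x" using that by auto
    then have "vl B m (\<sigma> \<circ> sw y x) = vl B m \<sigma> + 1"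
      using swap_val[of y m x B \<sigma>] that by (simp add: U_def)
    then show False using npT[of y x] \<open>y \<noteq> x\<close> that by (simp add: U_def)
  qed
  have hb: "B y' (\<sigma> y)" if "y\<in>U" "y'\<in>U" "\<not>B y (\<sigma> y)" "\<not>B y' (\<sigma> y')" "B y (\<sigma> y')" for y y'
  proof (rule ccontr)
    assume nb: "\<not> B y' (\<sigma> y)"
    have "y \<noteq> y'" using that by auto
    then have "vl B m (\<sigma> \<circ> sw y y') = vl B m \<sigma> + 1"
      using swap_val[of y m y' B \<sigma>] that nb by (simp add: U_def)
    then show False using npT[of y y'] \<open>y \<noteq> y'\<close> that by (simp add: U_def)
  qed
  have hc1: "B y' (\<sigma> x) = B x (\<sigma> y)" if "y\<in>U" "y'\<in>U" "x\<in>U" "\<not>B y (\<sigma> y)" "\<not>B y' (\<sigma> y')" "B x (\<sigma> x)"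
      "y\<noteq>y'" "B y (\<sigma> y')" for y y' x
  proof (rule ccontr)
    assume ne: "B y' (\<sigma> x) \<noteq> B x (\<sigma> y)"
    have d: "y' \<noteq> x" "y \<noteq> x" using that by auto
    have "vl B m (\<sigma> \<circ> sw y y' \<circ> sw y' x) = vl B m \<sigma> + 1"
      using cyc_val[of y m y' x B \<sigma>] that d ne by (cases "B y' (\<sigma> x)") (auto simp: U_def)
    then show False using npC[of y y' x] d that by (simp add: U_def)
  qed
  have hc2: "False" if "y\<in>U" "y'\<in>U" "x\<in>U" "\<not>B y (\<sigma> y)" "\<not>B y' (\<sigma> y')" "B x (\<sigma> x)"
      "y\<noteq>y'" "\<not> B y (\<sigma> y')" "B y' (\<sigma> x)" "B x (\<sigma> y)" for y y' x
  proof -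
    have d: "y' \<noteq> x" "y \<noteq> x" using that by auto
    have "vl B m (\<sigma> \<circ> sw y y' \<circ> sw y' x) = vl B m \<sigma> + 1"
      using cyc_val[of y m y' x B \<sigma>] that d by (auto simp: U_def)
    then show False using npC[of y y' x] d that by (simp add: U_def)
  qed
  have hd: "False" if "y\<in>U" "x\<in>U" "x'\<in>U" "\<not>B y (\<sigma> y)" "B x (\<sigma> x)" "B x' (\<sigma> x')"
      "x\<noteq>x'" "B y (\<sigma> x)" "B x (\<sigma> x')" "B x' (\<sigma> y)" for y x x'
  proof -
    have d: "y \<noteq> x" "y \<noteq> x'" using that by auto
    have "vl B m (\<sigma> \<circ> sw y x \<circ> sw x x') = vl B m \<sigma> + 1"
      using cyc_val[of y m x x' B \<sigma>] that d by (auto simp: U_def)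
    then show False using npC[of y x x'] d that by (simp add: U_def)
  qed
  have he: "False" if "y\<in>U" "y'\<in>U" "z\<in>U" "\<not>B y (\<sigma> y)" "\<not>B y' (\<sigma> y')" "\<not>B z (\<sigma> z)"
      "y\<noteq>y'" "y'\<noteq>z" "z\<noteq>y" "B y (\<sigma> y')" "\<not>B y' (\<sigma> z)" "\<not>B z (\<sigma> y)" for y y' z
  proof -
    have "vl B m (\<sigma> \<circ> sw y y' \<circ> sw y' z) = vl B m \<sigma> + 1"
      using cyc_val[of y m y' z B \<sigma>] that by (auto simp: U_def)
    then show False using npC[of y y' z] that by (simp add: U_def)
  qed
  have y0U: "y0 \<in> U" using y0 by (simp add: U_def)
  have C: "(\<exists>R C. \<forall>i\<in>U. \<forall>j\<in>U. B i (\<sigma> j) = (i\<in>R \<longleftrightarrow> j\<in>C)) \<and>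
      (\<exists>q\<in>U. \<not>B q (\<sigma> q) \<and> B y0 (\<sigma> q) \<and> B q (\<sigma> y0))"
    apply (rule core[where M="\<lambda>i j. B i (\<sigma> j)" and U=U and n=n])
    subgoal by (simp add: U_def m_def)
    subgoal using rowc by blast
    subgoal using colc by blast
    subgoal by (rule y0U)
    subgoal by (rule y0(2))
    subgoal using ha by blast
    subgoal using hb by blast
    subgoal using hc1 by blast
    subgoal using hc2 by blast
    subgoal using hd by blast
    subgoal using he by blast
    done
  then obtain R C where RC: "\<forall>i\<in>U. \<forall>j\<in>U. B i (\<sigma> j) = (i\<in>R \<longleftrightarrow> j\<in>C)" by blast
  have X: "isxor B (2*n)"
    unfolding isxor_def
  proof (intro exI allI impI)
    fix i j assume i: "i < 2*n" and j: "j < 2*n"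
    have "j \<in> \<sigma> ` U" using surj j by (simp add: U_def m_def)
    then obtain j' where j': "j' \<in> U" "\<sigma> j' = j" by blast
    have "j \<in> \<sigma> ` (C \<inter> U) \<longleftrightarrow> j' \<in> C"
      using j' inj by (auto simp: inj_on_def)
    then show "B i j = (i \<in> R \<longleftrightarrow> j \<in> \<sigma> ` (C \<inter> U))"
      using RC i j' by (auto simp: U_def m_def)
  qed
  from C obtain q where q: "q \<in> U" "\<not>B q (\<sigma> q)" "B y0 (\<sigma> q)" "B q (\<sigma> y0)" by blast
  have "y0 \<noteq> q" using q y0 by auto
  then have "vl B m (\<sigma> \<circ> sw y0 q) = vl B m \<sigma> + 2"
    using swap_val[of y0 m q B \<sigma>] q y0 by (simp add: U_def)
  moreover have "bij_betw (\<sigma> \<circ> sw y0 q) {..<2*n} {..<2*n}"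
    using bij_sw_comp[OF bij] y0 q by (simp add: U_def m_def)
  ultimately show ?thesis using X m_def by auto
qed

lemma par2: "(1::nat) + of_bool ((p1::bool) = q1) + of_bool ((p2::bool) = q2) \<noteq> of_bool (p1 = q2) + of_bool (p2 = q1)"
  by (cases p1; cases p2; cases q1; cases q2) auto

lemma par3: "(1::nat) + of_bool ((p1::bool) = q1) + of_bool ((p2::bool) = q2) + of_bool ((p3::bool) = q3)
   \<noteq> of_bool (p1 = q2) + of_bool (p2 = q3) + of_bool (p3 = q1)"
  by (cases p1; cases p2; cases p3; cases q1; cases q2; cases q3) auto

lemma ah2: "(v'::nat) + x + y = v + z + w \<Longrightarrow> v' = v + 1 \<Longrightarrow> 1 + x + y = z + w"
  by simp

lemma ah3: "(v'::nat) + x + y + u = v + z + w + t \<Longrightarrow> v' = v + 1 \<Longrightarrow> 1 + x + y + u = z + w + t"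
  by simp

lemma xor_noplus:
  assumes X: "isxor B m" and bij: "bij_betw \<sigma> {..<m} {..<m}"
  shows "noplus B m \<sigma>"
proof -
  obtain R C where RC: "\<And>i j. i<m \<Longrightarrow> j<m \<Longrightarrow> B i j = (i\<in>R \<longleftrightarrow> j\<in>C)"
    using X unfolding isxor_def by blast
  have sm: "\<And>i. i < m \<Longrightarrow> \<sigma> i < m" using bij unfolding bij_betw_def by auto
  have T: "vl B m (\<sigma> \<circ> sw a b) \<noteq> vl B m \<sigma> + 1" if "a<m" "b<m" "a\<noteq>b" for a b
  proof
    assume e: "vl B m (\<sigma> \<circ> sw a b) = vl B m \<sigma> + 1"
    have "vl B m (\<sigma> \<circ> sw a b) + of_bool (B a (\<sigma> a)) + of_bool (B b (\<sigma> b))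
       = vl B m \<sigma> + of_bool (B a (\<sigma> b)) + of_bool (B b (\<sigma> a))"
      by (rule swap_val) fact+
    then have "(1::nat) + of_bool (B a (\<sigma> a)) + of_bool (B b (\<sigma> b)) = of_bool (B a (\<sigma> b)) + of_bool (B b (\<sigma> a))"
      using e by (rule ah2)
    then show False using RC sm that par2[of "a\<in>R" "\<sigma> a \<in> C" "b \<in> R" "\<sigma> b \<in> C"] by simp
  qed
  have Cy: "vl B m (\<sigma> \<circ> sw a b \<circ> sw b c) \<noteq> vl B m \<sigma> + 1"
    if "a<m" "b<m" "c<m" "a\<noteq>b" "b\<noteq>c" "a\<noteq>c" for a b c
  proof
    assume e: "vl B m (\<sigma> \<circ> sw a b \<circ> sw b c) = vl B m \<sigma> + 1"
    have "vl B m (\<sigma> \<circ> sw a b \<circ> sw b c) + of_bool (B a (\<sigma> a)) + of_bool (B b (\<sigma> b)) + of_bool (B c (\<sigma> c))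
       = vl B m \<sigma> + of_bool (B a (\<sigma> b)) + of_bool (B b (\<sigma> c)) + of_bool (B c (\<sigma> a))"
      by (rule cyc_val) fact+
    then have "(1::nat) + of_bool (B a (\<sigma> a)) + of_bool (B b (\<sigma> b)) + of_bool (B c (\<sigma> c))
       = of_bool (B a (\<sigma> b)) + of_bool (B b (\<sigma> c)) + of_bool (B c (\<sigma> a))"
      using e by (rule ah3)
    then show False using RC sm that
      par3[of "a\<in>R" "\<sigma> a \<in> C" "b \<in> R" "\<sigma> b \<in> C" "c \<in> R" "\<sigma> c \<in> C"] by simp
  qed
  show ?thesis unfolding noplus_def using T Cy by blast
qed

lemma stepX:
  assumes rows: "\<forall>i<2*n. card {j. j<2*n \<and> B i j} = n"
    and cols: "\<forall>j<2*n. card {i. i<2*n \<and> B i j} = n"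
    and X: "isxor B (2*n)"
  shows "\<forall>\<sigma>. bij_betw \<sigma> {..<2*n} {..<2*n} \<and> vl B (2*n) \<sigma> < 2*n \<longrightarrow>
    (\<exists>\<sigma>'. bij_betw \<sigma>' {..<2*n} {..<2*n} \<and> vl B (2*n) \<sigma>' = vl B (2*n) \<sigma> + 2)"
  using step_core[OF rows cols] xor_noplus[OF X] by blast

lemma stepNX:
  assumes rows: "\<forall>i<2*n. card {j. j<2*n \<and> B i j} = n"
    and cols: "\<forall>j<2*n. card {i. i<2*n \<and> B i j} = n"
    and X: "\<not> isxor B (2*n)"
  shows "\<forall>\<sigma>. bij_betw \<sigma> {..<2*n} {..<2*n} \<and> vl B (2*n) \<sigma> < 2*n \<longrightarrow>
    (\<exists>\<sigma>'. bij_betw \<sigma>' {..<2*n} {..<2*n} \<and> vl B (2*n) \<sigma>' = vl B (2*n) \<sigma> + 1)"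
proof (intro allI impI)
  fix \<sigma> assume a: "bij_betw \<sigma> {..<2*n} {..<2*n} \<and> vl B (2*n) \<sigma> < 2*n"
  then have "\<not> noplus B (2*n) \<sigma>" using step_core[OF rows cols] X by blast
  then show "\<exists>\<sigma>'. bij_betw \<sigma>' {..<2*n} {..<2*n} \<and> vl B (2*n) \<sigma>' = vl B (2*n) \<sigma> + 1"
  proof -
    have b: "bij_betw \<sigma> {..<2*n} {..<2*n}" using a by blast
    from \<open>\<not> noplus B (2*n) \<sigma>\<close> consider
      (T) a b where "a<2*n" "b<2*n" "vl B (2*n) (\<sigma> \<circ> sw a b) = vl B (2*n) \<sigma> + 1"
    | (C) a b c where "a<2*n" "b<2*n" "c<2*n" "vl B (2*n) (\<sigma> \<circ> sw a b \<circ> sw b c) = vl B (2*n) \<sigma> + 1"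
      unfolding noplus_def by blast
    then show ?thesis
    proof cases
      case T
      then show ?thesis using bij_sw_comp[OF b] by blast
    next
      case C
      have "bij_betw (\<sigma> \<circ> sw a b \<circ> sw b c) {..<2*n} {..<2*n}"
        using bij_sw_comp[OF bij_sw_comp[OF b]] C by blast
      then show ?thesis using C by blast
    qed
  qed
qed

lemma chain:
  assumes st: "\<forall>\<sigma>. bij_betw \<sigma> {..<m} {..<m} \<and> vl B m \<sigma> < m \<longrightarrow>
    (\<exists>\<sigma>'. bij_betw \<sigma>' {..<m} {..<m} \<and> vl B m \<sigma>' = vl B m \<sigma> + c)"
    and c: "c > 0" and b0: "bij_betw \<sigma>0 {..<m} {..<m}"
  shows "vl B m \<sigma>0 + c*j \<le> m \<Longrightarrow> \<exists>\<sigma>. bij_betw \<sigma> {..<m} {..<m} \<and> vl B m \<sigma> = vl B m \<sigma>0 + c*j"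
proof (induction j)
  case 0
  then show ?case using b0 by auto
next
  case (Suc j)
  then obtain \<sigma> where s: "bij_betw \<sigma> {..<m} {..<m}" "vl B m \<sigma> = vl B m \<sigma>0 + c*j" by auto
  have "vl B m \<sigma> < m" using Suc.prems s c by simp
  then obtain \<sigma>' where "bij_betw \<sigma>' {..<m} {..<m}" "vl B m \<sigma>' = vl B m \<sigma> + c" using st s by blast
  then show ?case using s by (auto simp: algebra_simps)
qed

lemma vl_compl: "vl (\<lambda>i j. \<not> B i j) m \<sigma> = m - vl B m \<sigma>"
proof -
  have "{i. i < m \<and> \<not> B i (\<sigma> i)} \<union> {i. i < m \<and> B i (\<sigma> i)} = {..<m}" by auto
  moreover have "card ({i. i < m \<and> \<not> B i (\<sigma> i)} \<union> {i. i < m \<and> B i (\<sigma> i)})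
      = card {i. i < m \<and> \<not> B i (\<sigma> i)} + card {i. i < m \<and> B i (\<sigma> i)}"
    by (rule card_Un_disjoint) auto
  ultimately show ?thesis unfolding vl_def by simp
qed

lemma xor_compl: "isxor B m \<Longrightarrow> isxor (\<lambda>i j. \<not> B i j) m"
  unfolding isxor_def
proof -
  assume "\<exists>R C. \<forall>i<m. \<forall>j<m. B i j = (i \<in> R \<longleftrightarrow> j \<in> C)"
  then obtain R C where RC: "\<forall>i<m. \<forall>j<m. B i j = (i \<in> R \<longleftrightarrow> j \<in> C)" by blast
  have "\<forall>i<m. \<forall>j<m. (\<not> B i j) = (i \<in> R \<longleftrightarrow> j \<in> - C)" using RC by auto
  then show "\<exists>R C. \<forall>i<m. \<forall>j<m. (\<not> B i j) = (i \<in> R \<longleftrightarrow> j \<in> C)" by blast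
qed

lemma nxor_compl: assumes "\<not> isxor B m" shows "\<not> isxor (\<lambda>i j. \<not> B i j) m"
proof
  assume "isxor (\<lambda>i j. \<not> B i j) m"
  then have "isxor (\<lambda>i j. \<not> \<not> B i j) m" by (rule xor_compl)
  then show False using assms by simp
qed

lemma card_half:
  assumes "A \<subseteq> {..<2*n}" "card A = n \<or> card ({..<2*n} - A) = n"
  shows "card A = n"
proof -
  have "card ({..<2*n} - A) = 2*n - card A" using assms(1) by (simp add: card_Diff_subset finite_subset)
  moreover have "card A \<le> 2*n" using card_mono[OF _ assms(1)] by simp
  ultimately show ?thesis using assms(2) by auto
qed

lemma xor_iso:
  assumes rows: "\<forall>i<2*n. card {j. j<2*n \<and> B i j} = n"
    and cols: "\<forall>j<2*n. card {i. i<2*n \<and> B i j} = n"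
    and X: "isxor B (2*n)"
  shows "graph_iso (bip_vertices (2*n)) (blue_adj B) (two_Knn_vertices n) two_Knn_adj"
proof -
  define U where "U = {..<2*n}"
  obtain R C where RC: "\<And>i j. i<2*n \<Longrightarrow> j<2*n \<Longrightarrow> B i j = (i\<in>R \<longleftrightarrow> j\<in>C)"
    using X unfolding isxor_def by blast
  define R' where "R' = U \<inter> R"
  define C' where "C' = U \<inter> C"
  have finU: "finite U" by (simp add: U_def)
  have cC: "card C' = n"
  proof (cases "n = 0")
    case True then show ?thesis by (simp add: C'_def U_def)
  next
    case False
    then have z: "0 < 2*n" by simp
    have "card {j. j<2*n \<and> B 0 j} = n" using rows z by blast
    moreover have "{j. j<2*n \<and> B 0 j} = (if 0 \<in> R then C' else U - C')"
      using RC[OF z] by (auto simp: C'_def U_def)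
    ultimately have "card C' = n \<or> card (U - C') = n" by (auto split: if_splits)
    then show ?thesis using card_half[of C' n] by (auto simp: C'_def U_def)
  qed
  have cR: "card R' = n"
  proof (cases "n = 0")
    case True then show ?thesis by (simp add: R'_def U_def)
  next
    case False
    then have z: "0 < 2*n" by simp
    have "card {i. i<2*n \<and> B i 0} = n" using cols z by blast
    moreover have "{i. i<2*n \<and> B i 0} = (if 0 \<in> C then R' else U - R')"
      using RC[OF _ z] by (auto simp: R'_def U_def)
    ultimately have "card R' = n \<or> card (U - R') = n" by (auto split: if_splits)
    then show ?thesis using card_half[of R' n] by (auto simp: R'_def U_def)
  qed
  have cR2: "card (U - R') = n" using cR finU by (simp add: card_Diff_subset R'_def U_def)
  have cC2: "card (U - C') = n" using cC finU by (simp add: card_Diff_subset C'_def U_def)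
  have exb: "\<exists>g. bij_betw g A {..<n}" if "finite A" "card A = n" for A :: "nat set"
    using ex_bij_betw_finite_nat[OF that(1)] that(2) by (auto simp: atLeast0LessThan)
  obtain g1 where g1: "bij_betw g1 R' {..<n}" using exb[of R'] cR finU by (auto simp: R'_def)
  obtain g2 where g2: "bij_betw g2 (U - R') {..<n}" using exb[of "U - R'"] cR2 finU by auto
  obtain h1 where h1: "bij_betw h1 C' {..<n}" using exb[of C'] cC finU by (auto simp: C'_def)
  obtain h2 where h2: "bij_betw h2 (U - C') {..<n}" using exb[of "U - C'"] cC2 finU by auto
  define f where "f v = (case v of Inl i \<Rightarrow> (i\<in>R, False, if i\<in>R then g1 i else g2 i)
      | Inr j \<Rightarrow> (j\<in>C, True, if j\<in>C then h1 j else h2 j))" for v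
  have V: "bip_vertices (2*n) = Inl ` U \<union> Inr ` U" by (simp add: bip_vertices_def U_def)
  have W: "two_Knn_vertices n = UNIV \<times> UNIV \<times> {..<n}" by (simp add: two_Knn_vertices_def)
  have inj: "inj_on f (bip_vertices (2*n))"
  proof (rule inj_onI)
    fix u v assume u: "u \<in> bip_vertices (2*n)" and v: "v \<in> bip_vertices (2*n)" and e: "f u = f v"
    show "u = v"
    proof (cases u)
      case (Inl i)
      then have i: "i \<in> U" using u V by auto
      show ?thesis
      proof (cases v)
        case (Inl i')
        then have i': "i' \<in> U" using v V by auto
        have rr: "(i \<in> R) = (i' \<in> R)" using e \<open>u = Inl i\<close> Inl by (simp add: f_def)
        show ?thesis
        proof (cases "i \<in> R")
          case True
          then have "g1 i = g1 i'" "i \<in> R'" "i' \<in> R'" using e \<open>u = Inl i\<close> Inl rr i i'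
            by (auto simp: f_def R'_def)
          then show ?thesis using g1 \<open>u = Inl i\<close> Inl by (auto simp: bij_betw_def inj_on_def)
        next
          case False
          then have "g2 i = g2 i'" "i \<in> U - R'" "i' \<in> U - R'" using e \<open>u = Inl i\<close> Inl rr i i'
            by (auto simp: f_def R'_def)
          then show ?thesis using g2 \<open>u = Inl i\<close> Inl by (auto simp: bij_betw_def inj_on_def)
        qed
      next
        case (Inr j)
        then show ?thesis using e \<open>u = Inl i\<close> by (simp add: f_def)
      qed
    next
      case (Inr j)
      then have j: "j \<in> U" using u V by auto
      show ?thesis
      proof (cases v)
        case (Inr j')
        then have j': "j' \<in> U" using v V by auto
        have cc: "(j \<in> C) = (j' \<in> C)" using e \<open>u = Inr j\<close> Inr by (simp add: f_def)
        show ?thesis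
        proof (cases "j \<in> C")
          case True
          then have "h1 j = h1 j'" "j \<in> C'" "j' \<in> C'" using e \<open>u = Inr j\<close> Inr cc j j'
            by (auto simp: f_def C'_def)
          then show ?thesis using h1 \<open>u = Inr j\<close> Inr by (auto simp: bij_betw_def inj_on_def)
        next
          case False
          then have "h2 j = h2 j'" "j \<in> U - C'" "j' \<in> U - C'" using e \<open>u = Inr j\<close> Inr cc j j'
            by (auto simp: f_def C'_def)
          then show ?thesis using h2 \<open>u = Inr j\<close> Inr by (auto simp: bij_betw_def inj_on_def)
        qed
      next
        case (Inl i)
        then show ?thesis using e \<open>u = Inr j\<close> by (simp add: f_def)
      qed
    qed
  qed
  have img: "f ` bip_vertices (2*n) = two_Knn_vertices n"
  proof
    show "f ` bip_vertices (2*n) \<subseteq> two_Knn_vertices n"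
    proof
      fix w assume "w \<in> f ` bip_vertices (2*n)"
      then obtain v where v: "v \<in> bip_vertices (2*n)" "w = f v" by blast
      show "w \<in> two_Knn_vertices n"
      proof (cases v)
        case (Inl i)
        then have "i \<in> U" using v V by auto
        then show ?thesis using v Inl g1 g2 W
          by (auto simp: f_def R'_def bij_betw_def)
      next
        case (Inr j)
        then have "j \<in> U" using v V by auto
        then show ?thesis using v Inr h1 h2 W
          by (auto simp: f_def C'_def bij_betw_def)
      qed
    qed
    show "two_Knn_vertices n \<subseteq> f ` bip_vertices (2*n)"
    proof
      fix w assume "w \<in> two_Knn_vertices n"
      then obtain c s x where w: "w = (c, s, x)" "x < n" using W by auto
      have xn: "x \<in> {..<n}" using w by simp
      show "w \<in> f ` bip_vertices (2*n)"
      proof (cases s)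
        case False
        show ?thesis
        proof (cases c)
          case True
          have "x \<in> g1 ` (R')" using g1 xn unfolding bij_betw_def by simp
          then obtain i where i: "i \<in> R'" "g1 i = x" by blast
          then have "f (Inl i) = w" "Inl i \<in> bip_vertices (2*n)" using w True False V
            by (auto simp: f_def R'_def)
          then show ?thesis by force
        next
          case c: False
          have "x \<in> g2 ` (U - R')" using g2 xn unfolding bij_betw_def by simp
          then obtain i where i: "i \<in> U - R'" "g2 i = x" by blast
          then have "f (Inl i) = w" "Inl i \<in> bip_vertices (2*n)" using w c False V
            by (auto simp: f_def R'_def)
          then show ?thesis by force
        qed
      next
        case True
        show ?thesis
        proof (cases c)
          case c: True
          have "x \<in> h1 ` (C')" using h1 xn unfolding bij_betw_def by simp
          then obtain j where j: "j \<in> C'" "h1 j = x" by blast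
          then have "f (Inr j) = w" "Inr j \<in> bip_vertices (2*n)" using w c True V
            by (auto simp: f_def C'_def)
          then show ?thesis by force
        next
          case c: False
          have "x \<in> h2 ` (U - C')" using h2 xn unfolding bij_betw_def by simp
          then obtain j where j: "j \<in> U - C'" "h2 j = x" by blast
          then have "f (Inr j) = w" "Inr j \<in> bip_vertices (2*n)" using w c True V
            by (auto simp: f_def C'_def)
          then show ?thesis by force
        qed
      qed
    qed
  qed
  have adj: "\<forall>u\<in>bip_vertices (2*n). \<forall>v\<in>bip_vertices (2*n). blue_adj B u v \<longleftrightarrow> two_Knn_adj (f u) (f v)"
  proof (intro ballI)
    fix u v assume u: "u \<in> bip_vertices (2*n)" and v: "v \<in> bip_vertices (2*n)"
    show "blue_adj B u v \<longleftrightarrow> two_Knn_adj (f u) (f v)"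
    proof (cases u; cases v)
      fix i i' assume "u = Inl i" "v = Inl i'"
      then show ?thesis by (simp add: f_def two_Knn_adj_def)
    next
      fix i j assume a: "u = Inl i" "v = Inr j"
      then have "i < 2*n" "j < 2*n" using u v V U_def by auto
      then show ?thesis using a RC by (simp add: f_def two_Knn_adj_def)
    next
      fix j i assume a: "u = Inr j" "v = Inl i"
      then have "i < 2*n" "j < 2*n" using u v V U_def by auto
      then show ?thesis using a RC by (auto simp: f_def two_Knn_adj_def)
    next
      fix j j' assume "u = Inr j" "v = Inr j'"
      then show ?thesis by (simp add: f_def two_Knn_adj_def)
    qed
  qed
  show ?thesis unfolding graph_iso_def using inj img adj by (auto simp: bij_betw_def)
qed

lemma reach:
  assumes rows: "\<forall>i<2*n. card {j. j<2*n \<and> B i j} = n"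
    and cols: "\<forall>j<2*n. card {i. i<2*n \<and> B i j} = n"
    and rows': "\<forall>i<2*n. card {j. j<2*n \<and> \<not> B i j} = n"
    and cols': "\<forall>j<2*n. card {i. i<2*n \<and> \<not> B i j} = n"
    and w: "w \<le> 2*n" and par: "\<not> isxor B (2*n) \<or> even w"
  shows "\<exists>\<sigma>. bij_betw \<sigma> {..<2*n} {..<2*n} \<and> vl B (2*n) \<sigma> = w"
proof -
  define m where "m = 2*n"
  define B' where "B' = (\<lambda>i j. \<not> B i j)"
  have rows'': "\<forall>i<2*n. card {j. j<2*n \<and> B' i j} = n" using rows' by (simp add: B'_def)
  have cols'': "\<forall>j<2*n. card {i. i<2*n \<and> B' i j} = n" using cols' by (simp add: B'_def)
  have bid: "bij_betw id {..<m} {..<m}" by simp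
  define v0 where "v0 = vl B m id"
  have v0le: "v0 \<le> m" unfolding v0_def by (rule vl_le)
  have v0': "vl B' m id = m - v0" unfolding v0_def B'_def by (rule vl_compl)
  have bk: "\<And>s. vl B' m s = m - w \<Longrightarrow> vl B m s = w"
  proof -
    fix s assume a: "vl B' m s = m - w"
    show "vl B m s = w" using a vl_compl[of B m s] vl_le[of B m s] w m_def by (simp add: B'_def)
  qed
  show ?thesis
  proof (cases "isxor B (2*n)")
    case False
    have st: "\<forall>\<sigma>. bij_betw \<sigma> {..<m} {..<m} \<and> vl B m \<sigma> < m \<longrightarrow>
        (\<exists>\<sigma>'. bij_betw \<sigma>' {..<m} {..<m} \<and> vl B m \<sigma>' = vl B m \<sigma> + 1)"
      using stepNX[OF rows cols False] m_def by simp
    have st': "\<forall>\<sigma>. bij_betw \<sigma> {..<m} {..<m} \<and> vl B' m \<sigma> < m \<longrightarrow>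
        (\<exists>\<sigma>'. bij_betw \<sigma>' {..<m} {..<m} \<and> vl B' m \<sigma>' = vl B' m \<sigma> + 1)"
      using stepNX[OF rows'' cols''] nxor_compl[OF False] m_def B'_def by simp
    show ?thesis
    proof (cases "v0 \<le> w")
      case True
      then show ?thesis using chain[OF st _ bid, of "w - v0"] w m_def v0_def by simp
    next
      case False
      then obtain \<sigma> where "bij_betw \<sigma> {..<m} {..<m}" "vl B' m \<sigma> = m - w"
        using chain[OF st' _ bid, of "v0 - w"] v0' v0le by auto
      then show ?thesis using bk m_def by auto
    qed
  next
    case True
    then have ew: "even w" using par by simp
    have st: "\<forall>\<sigma>. bij_betw \<sigma> {..<m} {..<m} \<and> vl B m \<sigma> < m \<longrightarrow>
        (\<exists>\<sigma>'. bij_betw \<sigma>' {..<m} {..<m} \<and> vl B m \<sigma>' = vl B m \<sigma> + 2)"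
      using stepX[OF rows cols True] m_def by simp
    have st': "\<forall>\<sigma>. bij_betw \<sigma> {..<m} {..<m} \<and> vl B' m \<sigma> < m \<longrightarrow>
        (\<exists>\<sigma>'. bij_betw \<sigma>' {..<m} {..<m} \<and> vl B' m \<sigma>' = vl B' m \<sigma> + 2)"
      using stepX[OF rows'' cols''] xor_compl[OF True] m_def B'_def by simp
    have ev0: "even v0"
    proof (rule ccontr)
      assume odd: "\<not> even v0"
      define j where "j = (m - v0) div 2"
      have "v0 + 2*j = m - 1" using odd v0le m_def unfolding j_def by presburger
      then obtain \<sigma> where s: "bij_betw \<sigma> {..<m} {..<m}" "vl B m \<sigma> = m - 1"
        using chain[OF st _ bid, of j] v0_def by auto
      have "m > 0" using odd v0le m_def by (cases "m = 0") auto
      then have "vl B m \<sigma> < m" using s by simp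
      then obtain \<sigma>' where "vl B m \<sigma>' = vl B m \<sigma> + 2" using st s by blast
      then show False using vl_le[of B m \<sigma>'] s \<open>m > 0\<close> by simp
    qed
    show ?thesis
    proof (cases "v0 \<le> w")
      case True
      have "w = v0 + 2 * ((w - v0) div 2)" using True ev0 ew by presburger
      then show ?thesis using chain[OF st _ bid, of "(w - v0) div 2"] w m_def v0_def by simp
    next
      case False
      have "m - w = (m - v0) + 2 * ((v0 - w) div 2)" using False ev0 ew v0le by presburger
      then have e: "m - w = vl B' m id + 2 * ((v0 - w) div 2)" using v0' by simp
      then have "vl B' m id + 2 * ((v0 - w) div 2) \<le> m" by simp
      then obtain \<sigma> where "bij_betw \<sigma> {..<m} {..<m}" "vl B' m \<sigma> = vl B' m id + 2 * ((v0 - w) div 2)"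
        using chain[OF st' _ bid, of "(v0 - w) div 2"] by auto
      then show ?thesis using bk e m_def by auto
    qed
  qed
qed

theorem theorem1:
  fixes k n :: nat and blue :: "nat \<Rightarrow> nat \<Rightarrow> bool"
  assumes "k \<le> 2 * n"
    and "\<forall>i<2*n. card {j. j < 2*n \<and> blue i j} = n \<and> card {j. j < 2*n \<and> \<not> blue i j} = n"
    and "\<forall>j<2*n. card {i. i < 2*n \<and> blue i j} = n \<and> card {i. i < 2*n \<and> \<not> blue i j} = n"
    and "\<not> (odd k \<and> graph_iso (bip_vertices (2*n)) (blue_adj blue) (two_Knn_vertices n) two_Knn_adj)"
  shows "\<exists>\<sigma>. bij_betw \<sigma> {..<2*n} {..<2*n}
           \<and> card {i. i < 2*n \<and> \<not> blue i (\<sigma> i)} = k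
           \<and> card {i. i < 2*n \<and> blue i (\<sigma> i)} = 2*n - k"
proof -
  have rows: "\<forall>i<2*n. card {j. j<2*n \<and> blue i j} = n" using assms(2) by blast
  have rows': "\<forall>i<2*n. card {j. j<2*n \<and> \<not> blue i j} = n" using assms(2) by blast
  have cols: "\<forall>j<2*n. card {i. i<2*n \<and> blue i j} = n" using assms(3) by blast
  have cols': "\<forall>j<2*n. card {i. i<2*n \<and> \<not> blue i j} = n" using assms(3) by blast
  have par: "\<not> isxor blue (2*n) \<or> even (2*n - k)"
  proof (cases "isxor blue (2*n)")
    case True
    then have "graph_iso (bip_vertices (2*n)) (blue_adj blue) (two_Knn_vertices n) two_Knn_adj"
      using xor_iso[OF rows cols] by blast
    then have "even k" using assms(4) by blast
    then show ?thesis using assms(1) by simp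
  qed simp
  obtain \<sigma> where s: "bij_betw \<sigma> {..<2*n} {..<2*n}" "vl blue (2*n) \<sigma> = 2*n - k"
    using reach[OF rows cols rows' cols' _ par] by auto
  have "vl (\<lambda>i j. \<not> blue i j) (2*n) \<sigma> = k" using vl_compl[of blue "2*n" \<sigma>] s assms(1) by simp
  then show ?thesis using s unfolding vl_def by auto
qed

end
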